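(* Fix integers $1\le j<k$ and constants $0<\delta<1/6$ and $c>0$. Let $\varepsilon=\varepsilon(n)$ satisfy $\varepsilon\to0$, $\varepsilon^3n^j\to\infty$, $\varepsilon^2n^{1-2\delta}\to\infty$, let $p=(1+\varepsilon)p_0$ with $p_0=\frac{1}{(\binom{k}{j}-1)\binom{n}{k-j}}$, and let $\varepsilon_*=\varepsilon_*(n)$ satisfy $n^{-1/2+\delta}\ll\varepsilon_*\ll\varepsilon$. Let $\mathcal{T}_*$ be the Galton–Watson branching process starting from one individual in which each individual independently has $\left(\binom{k}{j}-1\right)\cdot Z$ children, where $Z\sim\mathrm{Bi}\!\left((1-\varepsilon_* )\binom{n}{k-j},p\right)$. Let $x:=(j-1+\delta+c)\varepsilon^{-1}\log n$ and let $|\mathcal{T}_*(x)|$ be the size of generation $x$ of $\mathcal{T}_*$. Then, for $n$ sufficiently large, $\Pr\big(|\mathcal{T}_*(x)|\ge n^{j-1+\delta}\big)\ge\varepsilon/n^{c}$.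
   Context: Floors and ceilings are omitted where irrelevant (e.g. $x$ and $(1-\varepsilon_* )\binom{n}{k-j}$ are rounded to integers). The notation $a\cdot Z$ means the random variable taking value $ai$ with probability $\Pr(Z=i)$. *)

theory Defs
  imports "HOL-Probability.Probability"
begin

fun iid_sum_pmf :: "nat pmf \<Rightarrow> nat \<Rightarrow> nat pmf" where
  "iid_sum_pmf d 0 = return_pmf 0"
| "iid_sum_pmf d (Suc m) = bind_pmf d (\<lambda>a. map_pmf (\<lambda>b. a + b) (iid_sum_pmf d m))"

text \<open>Law of the size of generation t of a Galton-Watson process started from one
  individual, with offspring distribution d.\<close>
fun gw_generation :: "nat pmf \<Rightarrow> nat \<Rightarrow> nat pmf" where
  "gw_generation d 0 = return_pmf 1"
| "gw_generation d (Suc t) = bind_pmf (gw_generation d t) (iid_sum_pmf d)"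

definition scale_pmf :: "nat \<Rightarrow> nat pmf \<Rightarrow> nat pmf" where
  "scale_pmf a Z = map_pmf (\<lambda>i. a * i) Z"

end

theory Submission
  imports Defs
begin

abbreviation "E q f \<equiv> measure_pmf.expectation q f"
definition m1 :: "nat pmf \<Rightarrow> real" where "m1 q = E q real"
definition m2 :: "nat pmf \<Rightarrow> real" where "m2 q = E q (\<lambda>x. real x ^ 2)"

lemma fin_iid: "finite (set_pmf d) \<Longrightarrow> finite (set_pmf (iid_sum_pmf d m))"
  by (induction m) auto

lemma fin_gw: "finite (set_pmf d) \<Longrightarrow> finite (set_pmf (gw_generation d t))"
  by (induction t) (auto intro: fin_iid)

lemma E_bind:
  fixes h :: "'b \<Rightarrow> real"
  assumes "finite (set_pmf p)" "\<And>x. x \<in> set_pmf p \<Longrightarrow> finite (set_pmf (f x))"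
  shows "E (bind_pmf p f) h = E p (\<lambda>x. E (f x) h)"
proof -
  have "E (bind_pmf p f) h = (\<Sum>a\<in>set_pmf p. pmf p a *\<^sub>R E (f a) h)"
    by (rule pmf_expectation_bind[OF assms(1)]) (use assms in auto)
  also have "\<dots> = E p (\<lambda>x. E (f x) h)"
    by (rule integral_measure_pmf[symmetric]) (use assms in auto)
  finally show ?thesis .
qed

lemma E_sum:
  fixes h :: "nat \<Rightarrow> real"
  assumes "finite (set_pmf A)" "finite (set_pmf B)"
  shows "E (bind_pmf A (\<lambda>a. map_pmf (\<lambda>b. a + b) B)) h = E A (\<lambda>a. E B (\<lambda>b. h (a + b)))"
  by (subst E_bind) (use assms in auto)

lemma intfin: "finite (set_pmf q) \<Longrightarrow> integrable (measure_pmf q) (f :: _ \<Rightarrow> real)"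
  by (rule integrable_measure_pmf_finite)

lemma E_prob_total: "E q (\<lambda>_. c) = (c::real)"
  by simp

lemma m_iid:
  assumes "finite (set_pmf d)"
  shows "m1 (iid_sum_pmf d m) = m * m1 d \<and> m2 (iid_sum_pmf d m) = m * m2 d + real m * (real m - 1) * m1 d ^ 2"
proof (induction m)
  case 0 then show ?case by (simp add: m1_def m2_def)
next
  case (Suc m)
  let ?B = "iid_sum_pmf d m"
  have fB: "finite (set_pmf ?B)" using fin_iid assms by blast
  have a: "m1 (iid_sum_pmf d (Suc m)) = m1 d + m1 ?B"
    unfolding m1_def using assms fB
    by (simp add: E_sum intfin integral_add)
  have "m2 (iid_sum_pmf d (Suc m)) = E d (\<lambda>a. E ?B (\<lambda>b. real a ^ 2 + 2 * real a * real b + real b ^ 2))"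
    unfolding m2_def using assms fB by (simp add: E_sum power2_eq_square algebra_simps)
  also have "\<dots> = E d (\<lambda>a. real a ^ 2 + 2 * real a * m1 ?B + m2 ?B)"
    unfolding m1_def m2_def using fB by (simp add: intfin integral_add)
  also have "\<dots> = m2 d + 2 * m1 d * m1 ?B + m2 ?B"
    unfolding m1_def m2_def using assms by (simp add: intfin integral_add mult.commute mult.left_commute)
  finally show ?case using a Suc by (simp add: algebra_simps power2_eq_square)
qed


lemma m_gw:
  assumes "finite (set_pmf d)"
  shows "m1 (gw_generation d (Suc t)) = m1 d * m1 (gw_generation d t) \<and>
         m2 (gw_generation d (Suc t)) = (m2 d - m1 d ^ 2) * m1 (gw_generation d t) + m1 d ^ 2 * m2 (gw_generation d t)"
proof -
  let ?Z = "gw_generation d t"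
  have fZ: "finite (set_pmf ?Z)" using fin_gw assms by blast
  have fI: "\<And>x. finite (set_pmf (iid_sum_pmf d x))" using fin_iid assms by blast
  have a: "m1 (gw_generation d (Suc t)) = E ?Z (\<lambda>z. m1 (iid_sum_pmf d z))"
    unfolding m1_def using fZ fI by (simp add: E_bind)
  also have "\<dots> = E ?Z (\<lambda>z. real z * m1 d)" using m_iid[OF assms] by simp
  also have "\<dots> = m1 d * m1 ?Z" unfolding m1_def by (simp add: mult.commute)
  finally have A: "m1 (gw_generation d (Suc t)) = m1 d * m1 ?Z" .
  have "m2 (gw_generation d (Suc t)) = E ?Z (\<lambda>z. m2 (iid_sum_pmf d z))"
    unfolding m2_def using fZ fI by (simp add: E_bind)
  also have "\<dots> = E ?Z (\<lambda>z. real z * (m2 d - m1 d ^ 2) + real z ^ 2 * m1 d ^ 2)"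
  proof -
    have "\<And>z. m2 (iid_sum_pmf d z) = real z * (m2 d - m1 d ^ 2) + real z ^ 2 * m1 d ^ 2"
      using m_iid[OF assms] by (simp add: algebra_simps power2_eq_square)
    then show ?thesis by simp
  qed
  also have "\<dots> = (m2 d - m1 d ^ 2) * m1 ?Z + m1 d ^ 2 * m2 ?Z"
    unfolding m1_def m2_def using fZ by (simp add: intfin integral_add mult.commute)
  finally show ?thesis using A by simp
qed

lemma m_gw_closed:
  assumes "finite (set_pmf d)" "m1 d > 1" "m2 d - m1 d ^ 2 \<ge> 0"
  defines "K \<equiv> 1 + (m2 d - m1 d ^ 2) / (m1 d * (m1 d - 1))"
  shows "m1 (gw_generation d t) = m1 d ^ t \<and>
         m2 (gw_generation d t) + (m2 d - m1 d ^ 2) * m1 d ^ t / (m1 d * (m1 d - 1)) = K * m1 d ^ (2*t)"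
proof (induction t)
  case 0 then show ?case by (simp add: m1_def m2_def K_def)
next
  case (Suc t)
  define \<mu> where "\<mu> = m1 d"
  define v where "v = m2 d - m1 d ^ 2"
  have mu: "\<mu> > 1" using assms \<mu>_def by simp
  have e1: "m1 (gw_generation d t) = \<mu> ^ t" and e2: "m2 (gw_generation d t) = K * \<mu> ^ (2*t) - v * \<mu> ^ t / (\<mu> * (\<mu> - 1))"
    using Suc unfolding \<mu>_def v_def by auto
  have s: "m1 (gw_generation d (Suc t)) = \<mu> * \<mu>^t" "m2 (gw_generation d (Suc t)) = v * \<mu>^t + \<mu>^2 * (K * \<mu> ^ (2*t) - v * \<mu> ^ t / (\<mu> * (\<mu> - 1)))"
    using m_gw[OF assms(1), of t] e1 e2 unfolding \<mu>_def v_def by auto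
  have "v * \<mu>^t + \<mu>^2 * (K * \<mu> ^ (2*t) - v * \<mu> ^ t / (\<mu> * (\<mu> - 1))) + v * \<mu>^Suc t / (\<mu> * (\<mu> - 1)) = K * \<mu>^(2 * Suc t)"
  proof -
    have h: "\<And>a X. v * a + \<mu>^2 * (K * X - v * a / (\<mu> * (\<mu> - 1))) + v * (\<mu> * a) / (\<mu> * (\<mu> - 1)) = K * (\<mu>^2 * X)"
    proof -
      fix a X
      have d: "\<mu> - 1 \<noteq> 0" "\<mu> \<noteq> 0" using mu by auto
      have e1: "\<mu>^2 * (v * a/(\<mu> * (\<mu> - 1))) = v * a + v * a/(\<mu>-1)" using d by (simp add: field_simps power2_eq_square)
      have e2: "v * (\<mu>*a)/(\<mu> * (\<mu> - 1)) = v * a/(\<mu>-1)" using d by simp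
      have e3: "\<mu>^2 * (K * X - v * a / (\<mu> * (\<mu> - 1))) = K * (\<mu>^2 * X) - \<mu>^2 * (v * a / (\<mu> * (\<mu> - 1)))"
        by (simp add: algebra_simps)
      show "v * a + \<mu>^2 * (K * X - v * a / (\<mu> * (\<mu> - 1))) + v * (\<mu> * a) / (\<mu> * (\<mu> - 1)) = K * (\<mu>^2 * X)"
        using e1 e2 e3 by linarith
    qed
    have pe1: "\<mu>^(2 * Suc t) = \<mu>^2 * \<mu>^(2*t)" by (simp add: power_add[symmetric])
    have pe2: "\<mu>^(Suc t) = \<mu> * \<mu>^t" by simp
    show ?thesis unfolding pe1 pe2 by (rule h)
  qed
  moreover have vv: "m2 d - \<mu>^2 = v" using v_def \<mu>_def by simp
  ultimately show ?case using s unfolding \<mu>_def[symmetric] by (simp add: vv)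
qed

lemma m_scale:
  "m1 (scale_pmf a Z) = a * m1 Z" "m2 (scale_pmf a Z) = real a ^ 2 * m2 Z"
  unfolding m1_def m2_def scale_pmf_def by (simp_all add: power_mult_distrib)

lemma binom_iid:
  assumes "p \<in> {0..1}"
  shows "binomial_pmf n p = iid_sum_pmf (map_pmf (\<lambda>b. if b then 1 else 0) (bernoulli_pmf p)) n"
proof (induction n)
  case 0 then show ?case using assms by (simp add: binomial_pmf_0)
next
  case (Suc n) then show ?case using assms
    by (simp add: binomial_pmf_Suc map_pmf_def bind_assoc_pmf bind_return_pmf)
qed

lemma m_binom:
  assumes "p \<in> {0..1}"
  shows "m1 (binomial_pmf n p) = n * p" "m2 (binomial_pmf n p) = n * p + real n * (real n - 1) * p^2"
proof -
  let ?d = "map_pmf (\<lambda>b. if b then 1 else 0) (bernoulli_pmf p) :: nat pmf"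
  have f: "finite (set_pmf ?d)" by simp
  have a: "m1 ?d = p" "m2 ?d = p" unfolding m1_def m2_def using assms
    by (simp_all add: integral_measure_pmf[of UNIV] UNIV_bool)
  show "m1 (binomial_pmf n p) = n * p" "m2 (binomial_pmf n p) = n * p + real n * (real n - 1) * p^2"
    using m_iid[OF f, of n] a binom_iid[OF assms] by auto
qed

lemma PZ:
  fixes q :: "nat pmf" and \<theta> :: real
  assumes "finite (set_pmf q)" "m1 q > 0" "0 \<le> \<theta>" "\<theta> < 1"
  shows "measure_pmf.prob q {m. real m \<ge> \<theta> * m1 q} \<ge> (1-\<theta>)^2 * m1 q ^ 2 / m2 q"
proof -
  define A where "A = {m. real m \<ge> \<theta> * m1 q}"
  define P where "P = measure_pmf.prob q A"
  have le12: "m1 q \<le> m2 q" unfolding m1_def m2_def using assms(1)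
  proof (intro integral_mono intfin)
    fix x :: nat show "real x \<le> real x ^ 2" by (cases x) (auto simp: power2_eq_square)
  qed (use assms(1) in auto)
  have m2pos: "m2 q > 0" using le12 assms by linarith
  define t where "t = m2 q / ((1-\<theta>) * m1 q)"
  have tpos: "t > 0" using assms m2pos by (simp add: t_def)
  have pw: "real x \<le> \<theta> * m1 q + real x ^ 2 / (2*t) + t/2 * indicator A x" for x
  proof (cases "x \<in> A")
    case True
    have "0 \<le> (real x - t)^2 / (2*t)" using tpos by simp
    then have "real x \<le> real x ^ 2 / (2*t) + t/2" using tpos
      by (simp add: power2_eq_square field_simps)
    moreover have "0 \<le> \<theta> * m1 q" using assms by simp
    ultimately show ?thesis using True by simp
  next
    case False
    then have "real x < \<theta> * m1 q" unfolding A_def by auto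
    moreover have "0 \<le> real x ^ 2 / (2*t)" using tpos by simp
    ultimately show ?thesis using False by simp
  qed
  have "E q real \<le> E q (\<lambda>x. \<theta> * m1 q + real x ^ 2 / (2*t) + t/2 * indicator A x)"
    using assms(1) pw by (intro integral_mono intfin) auto
  then have "m1 q \<le> E q (\<lambda>x. \<theta> * m1 q + real x ^ 2 / (2*t) + t/2 * indicator A x)"
    by (simp only: m1_def)
  also have "\<dots> = \<theta> * m1 q + m2 q / (2*t) + t/2 * P"
    unfolding m2_def P_def using assms(1)
    by (simp add: intfin integral_add)
  finally have "m1 q \<le> \<theta> * m1 q + m2 q / (2*t) + t/2 * P" .
  moreover have "m2 q / (2*t) = (1-\<theta>) * m1 q / 2" using assms m2pos by (simp add: t_def field_simps)
  ultimately have "(1-\<theta>) * m1 q / 2 \<le> t/2 * P" by (simp add: algebra_simps)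
  then have "P \<ge> (1-\<theta>) * m1 q / t" using tpos by (simp add: field_simps)
  moreover have "(1-\<theta>) * m1 q / t = (1-\<theta>)^2 * m1 q^2 / m2 q"
    using assms m2pos by (simp add: t_def field_simps power2_eq_square)
  ultimately show ?thesis unfolding P_def A_def by simp
qed


lemma gw_lower:
  assumes "finite (set_pmf d)" "m1 d > 1" "m2 d - m1 d ^ 2 \<ge> 0"
  shows "measure_pmf.prob (gw_generation d t) {m. real m \<ge> m1 d ^ t / 2}
           \<ge> 1 / (4 * (1 + (m2 d - m1 d ^ 2) / (m1 d * (m1 d - 1))))"
proof -
  define K where "K = 1 + (m2 d - m1 d ^ 2) / (m1 d * (m1 d - 1))"
  define \<mu> where "\<mu> = m1 d"
  let ?q = "gw_generation d t"
  have c: "m1 ?q = \<mu> ^ t" "m2 ?q + (m2 d - m1 d ^ 2) * \<mu> ^ t / (\<mu> * (\<mu> - 1)) = K * \<mu> ^ (2*t)"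
    using m_gw_closed[OF assms, of t] unfolding K_def \<mu>_def by auto
  have mu: "\<mu> > 1" using assms \<mu>_def by simp
  have "(m2 d - m1 d ^ 2) * \<mu> ^ t / (\<mu> * (\<mu> - 1)) \<ge> 0" using mu assms by simp
  then have m2le: "m2 ?q \<le> K * \<mu> ^ (2*t)" using c by linarith
  have Kpos: "K \<ge> 1" unfolding K_def using assms by simp
  have fq: "finite (set_pmf ?q)" using fin_gw assms by blast
  have pos: "m1 ?q > 0" using c mu by simp
  have "measure_pmf.prob ?q {m. real m \<ge> 1/2 * m1 ?q} \<ge> (1-1/2)^2 * m1 ?q ^ 2 / m2 ?q"
    by (rule PZ[OF fq pos]) auto
  moreover have m2pos: "m2 ?q > 0"
  proof -
    have "m1 ?q \<le> m2 ?q" unfolding m1_def m2_def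
    proof (intro integral_mono intfin)
      fix x :: nat show "real x \<le> real x ^ 2" by (cases x) (auto simp: power2_eq_square)
    qed (use fq in auto)
    then show ?thesis using pos by linarith
  qed
  moreover have "(1-1/2)^2 * m1 ?q ^ 2 / m2 ?q \<ge> 1 / (4 * K)"
  proof -
    have "m1 ?q ^ 2 = \<mu> ^ (2*t)" using c by (simp add: power_mult[symmetric] mult.commute)
    moreover have "\<mu> ^ (2*t) / m2 ?q \<ge> 1 / K"
      using m2le m2pos Kpos mu by (simp add: field_simps)
    ultimately show ?thesis by (simp add: field_simps)
  qed
  ultimately show ?thesis unfolding K_def[symmetric] using c \<mu>_def by (simp add: mult.commute)
qed


lemma hlp: "0 \<le> X \<Longrightarrow> X \<le> Y \<Longrightarrow> 1/(4*(1+Y)) \<le> 1/(4*(1+(X::real)))"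
  by (intro frac_le) auto

lemma core:
  fixes j k n N x :: nat and \<delta> c e es \<eta> p :: real
  assumes j: "1 \<le> j" "j < k" and d: "0 < \<delta>" and c: "0 < c"
    and eta: "0 < \<eta>" "\<eta> \<le> 1/2" "\<eta> \<le> c / (4 * (real j - 1 + \<delta> + c))"
    and e: "0 < e" "e \<le> \<eta>" and es: "0 < es" "es \<le> \<eta>/4 * e"
    and rn: "real (k - j) / real n \<le> \<eta>/4 * e"
    and n: "2 * k \<le> n" "4 + 8 * (real (k choose j) - 1) \<le> real n powr c"
       "1 + ln 2 \<le> c/2 * ln (real n)"
    and Ndef: "N = nat \<lfloor>(1 - es) * real (n choose (k - j))\<rfloor>"
    and pdef: "p = (1 + e) * (1 / ((real (k choose j) - 1) * real (n choose (k - j))))"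
    and xdef: "x = nat \<lfloor>(real j - 1 + \<delta> + c) / e * ln (real n)\<rfloor>"
  shows "measure_pmf.prob (gw_generation (scale_pmf ((k choose j) - 1) (binomial_pmf N p)) x)
           {m. real m \<ge> real n powr (real j - 1 + \<delta>)} \<ge> e / real n powr c"
proof -
  define r where "r = k - j"
  define C where "C = k choose j"
  define B where "B = real (n choose r)"
  define a where "a = real j - 1 + \<delta> + c"
  define b where "b = real j - 1 + \<delta>"
  have r1: "r \<ge> 1" using j r_def by simp
  have apos: "a > 0" using j d c a_def by simp
  have "(real k / real j) ^ j \<le> real C" unfolding C_def
    by (rule binomial_ge_n_over_k_pow_k) (use j in simp)
  moreover have "1 < (real k / real j) ^ j" using j by (intro one_less_power) auto
  ultimately have C2: "C \<ge> 2" by linarith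
  define Cr where "Cr = real C - 1"
  have Cr1: "Cr \<ge> 1" using C2 Cr_def by simp
  have rCm1: "real (C - 1) = Cr" using C2 Cr_def by simp
  have npos: "real n > 0" using n j by simp
  have rlen: "r \<le> n" using r_def n by simp
  have "(real n / real r) ^ r \<le> B" unfolding B_def by (rule binomial_ge_n_over_k_pow_k) (use rlen in simp)
  moreover have "real n / real r \<ge> 1" using rlen r1 by simp
  then have "real n / real r \<le> (real n / real r) ^ r"
    using power_increasing[of 1 r "real n / real r"] r1 by simp
  ultimately have Bge: "B \<ge> real n / real r" by linarith
  have B2: "B \<ge> 2" using Bge n r_def r1
  proof -
    have "real n \<ge> 2 * real r" using n r_def by simp
    then have "real n / real r \<ge> 2" using r1 by (simp add: field_simps)
    then show ?thesis using Bge by linarith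
  qed
  have invB: "1 / B \<le> \<eta>/4 * e"
  proof -
    have "1 / B \<le> 1 / (real n / real r)" using Bge r1 npos B2 by (intro divide_left_mono) (auto simp: mult_pos_pos)
    moreover have "1 / (real n / real r) = real (k - j) / real n" using r_def by simp
    ultimately show ?thesis using rn by linarith
  qed
  have p_eq: "p = (1 + e) / (Cr * B)" using pdef Cr_def C_def B_def r_def by simp
  have p01: "p \<in> {0..1}"
  proof -
    have "p \<le> 2 / (Cr * B)" unfolding p_eq using e eta Cr1 B2 by (intro divide_right_mono) auto
    also have "\<dots> \<le> 2 / (1 * 2)" using Cr1 B2 by (intro divide_left_mono mult_mono) auto
    finally show ?thesis using p_eq e Cr1 B2 by auto
  qed
  define y where "y = (1 - es) * B"
  have es1: "es \<le> 1/8"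
  proof -
    have "\<eta>/4 * e \<le> 1/8 * 1" using eta e by (intro mult_mono) auto
    then show ?thesis using es by linarith
  qed
  have ypos: "y \<ge> 0" using y_def es1 B2 by simp
  have NB: "real N \<le> y" "real N \<ge> y - 1"
  proof -
    have "N = nat \<lfloor>y\<rfloor>" using Ndef y_def B_def r_def by simp
    then have "real N = of_int \<lfloor>y\<rfloor>" using ypos by simp
    then show "real N \<le> y" "real N \<ge> y - 1" by linarith+
  qed
  define off where "off = scale_pmf (C - 1) (binomial_pmf N p)"
  define \<mu> where "\<mu> = m1 off"
  have mu_eq: "\<mu> = Cr * (real N * p)" unfolding \<mu>_def off_def using m_scale m_binom[OF p01] rCm1 by simp
  have mu_eq2: "\<mu> = real N * (1 + e) / B" unfolding mu_eq p_eq using Cr1 B2 by simp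
  have V_eq: "m2 off - \<mu> ^ 2 = Cr^2 * (real N * p * (1 - p))"
  proof -
    have "m2 off = Cr^2 * (real N * p + real N * (real N - 1) * p^2)"
      unfolding off_def by (simp only: m_scale m_binom[OF p01] rCm1)
    then show ?thesis unfolding mu_eq by (simp add: algebra_simps power2_eq_square)
  qed
  have Vnn: "m2 off - \<mu> ^ 2 \<ge> 0" unfolding V_eq using p01 by simp
  have V_le: "m2 off - \<mu> ^ 2 \<le> Cr * \<mu>"
  proof -
    have "Cr^2 * (real N * p * (1 - p)) \<le> Cr^2 * (real N * p)"
      using p01 by (intro mult_left_mono) (auto simp: mult_left_le)
    moreover have "Cr^2 * (real N * p) = Cr * \<mu>" unfolding mu_eq by (simp add: power2_eq_square)
    ultimately show ?thesis using V_eq by linarith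
  qed
  have mu_up: "\<mu> \<le> 1 + e"
  proof -
    have "\<mu> \<le> y * (1 + e) / B" unfolding mu_eq2 using NB e B2 by (intro divide_right_mono mult_right_mono) auto
    also have "\<dots> = (1 - es) * (1 + e)" using B2 y_def by simp
    also have "\<dots> \<le> 1 + e" using es e by (simp add: mult_le_cancel_right1)
    finally show ?thesis .
  qed
  have mu_low: "\<mu> \<ge> 1 + e * (1 - \<eta>)"
  proof -
    have "\<mu> \<ge> (y - 1) * (1 + e) / B" unfolding mu_eq2 using NB e B2 by (intro divide_right_mono mult_right_mono) auto
    moreover have "(y - 1) * (1 + e) / B = (1 - es - 1/B) * (1 + e)"
    proof -
      have "(y - 1) / B = 1 - es - 1/B" using B2 unfolding y_def by (simp add: diff_divide_distrib)
      then show ?thesis by (metis times_divide_eq_left)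
    qed
    moreover have "1 - es - 1/B \<ge> 1 - \<eta>/2 * e" using es invB by simp
    moreover have "(1 - \<eta>/2 * e) * (1 + e) \<ge> 1 + e * (1 - \<eta>)"
    proof -
      have "e * e \<le> e" using e eta by (simp add: mult_le_cancel_left1)
      then have "\<eta>/2 * (e * e) \<le> \<eta>/2 * e" using eta by (intro mult_left_mono) auto
      then show ?thesis by (simp add: algebra_simps)
    qed
    ultimately show ?thesis using e by (smt (verit) mult_right_mono)
  qed
  have mu1: "\<mu> - 1 \<ge> e / 2"
  proof -
    have "e * (1 - \<eta>) \<ge> e * (1/2)" using e eta by (intro mult_left_mono) auto
    then show ?thesis using mu_low by simp
  qed
  have mugt: "\<mu> > 1" using mu1 e by simp
  have foff: "finite (set_pmf off)" unfolding off_def scale_pmf_def using finite_set_pmf_binomial_pmf[OF p01] by auto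
  have main: "measure_pmf.prob (gw_generation off x) {m. real m \<ge> \<mu> ^ x / 2}
           \<ge> 1 / (4 * (1 + (m2 off - \<mu> ^ 2) / (\<mu> * (\<mu> - 1))))"
    using gw_lower[OF foff] mugt Vnn unfolding \<mu>_def by simp
  have Kb: "1 / (4 * (1 + (m2 off - \<mu> ^ 2) / (\<mu> * (\<mu> - 1)))) \<ge> e / real n powr c"
  proof -
    have "(m2 off - \<mu> ^ 2) / (\<mu> * (\<mu> - 1)) \<le> Cr * \<mu> / (\<mu> * (\<mu> - 1))"
      using V_le mugt by (intro divide_right_mono) auto
    also have "\<dots> = Cr / (\<mu> - 1)" using mugt by simp
    also have "\<dots> \<le> Cr / (e/2)" using mu1 e Cr1 by (intro divide_left_mono) auto
    finally have k1: "(m2 off - \<mu> ^ 2) / (\<mu> * (\<mu> - 1)) \<le> 2 * Cr / e" by (simp add: mult.commute)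
    have Kpos: "0 \<le> (m2 off - \<mu> ^ 2) / (\<mu> * (\<mu> - 1))" using Vnn mugt by simp
    have "e / real n powr c \<le> e / (4 + 8 * Cr)"
      using n(2) e Cr1 npos unfolding Cr_def C_def by (intro divide_left_mono) (auto intro!: mult_pos_pos)
    also have "\<dots> \<le> 1 / (4 * (1 + 2 * Cr / e))"
      using e eta Cr1 by (simp add: field_simps)
    also have "\<dots> \<le> 1 / (4 * (1 + (m2 off - \<mu> ^ 2) / (\<mu> * (\<mu> - 1))))"
      by (rule hlp[OF Kpos k1])
    finally show ?thesis .
  qed
  have lnmu: "ln \<mu> \<ge> e * (1 - 2 * \<eta>)"
  proof -
    have "ln (1 / \<mu>) \<le> 1 / \<mu> - 1" using mugt by (intro ln_le_minus_one) auto
    then have l1: "ln \<mu> \<ge> (\<mu> - 1) / \<mu>" using mugt by (simp add: ln_div field_simps)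
    have "(\<mu> - 1) / \<mu> \<ge> e * (1 - \<eta>) / (1 + e)"
      using mu_low mu_up mugt e eta by (intro frac_le) auto
    moreover have "e * (1 - \<eta>) / (1 + e) \<ge> e * (1 - 2 * \<eta>)"
    proof -
      have "e * (1 - 2 * \<eta>) * (1 + e) \<le> e * (1 - \<eta>)"
      proof -
        have h0: "0 \<le> \<eta> * (e * 2)" using e eta by simp
        have h1: "(1 - 2*\<eta>) * (1 + e) = 1 + e - 2*\<eta> - \<eta> * (e * 2)" by (simp add: algebra_simps)
        have "(1 - 2*\<eta>) * (1 + e) \<le> 1 - \<eta>" using h0 h1 e eta by linarith
        then have "e * ((1 - 2*\<eta>) * (1 + e)) \<le> e * (1 - \<eta>)" using e by (intro mult_left_mono) auto
        then show ?thesis by (simp add: mult.assoc)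
      qed
      then show ?thesis using e by (simp add: field_simps)
    qed
    ultimately show ?thesis using l1 by linarith
  qed
  have lnn: "ln (real n) \<ge> 0" using npos n by (simp add: ln_ge_zero_iff) 
  have xlow: "real x \<ge> a / e * ln (real n) - 1"
  proof -
    have h: "a / e * ln (real n) \<ge> 0" using apos e lnn by simp
    have "x = nat \<lfloor>a / e * ln (real n)\<rfloor>" using xdef a_def by simp
    then have "real x = of_int \<lfloor>a / e * ln (real n)\<rfloor>" using h by simp
    then show ?thesis by linarith
  qed
  have "real x * ln \<mu> \<ge> ln 2 + b * ln (real n)"
  proof -
    have "real x * ln \<mu> \<ge> (a / e * ln (real n) - 1) * (e * (1 - 2 * \<eta>))"
      using xlow lnmu eta e by (intro mult_mono) auto
    also have "(a / e * ln (real n) - 1) * (e * (1 - 2 * \<eta>)) = a * (1 - 2*\<eta>) * ln (real n) - e * (1 - 2*\<eta>)"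
      using e by (simp add: field_simps)
    also have "\<dots> \<ge> (b + c/2) * ln (real n) - 1"
    proof -
      have "2 * \<eta> * a \<le> c / 2" using eta apos unfolding a_def[symmetric] by (simp add: field_simps)
      moreover have "a = b + c" using a_def b_def by simp
      moreover have "a * (1 - 2*\<eta>) = a - 2 * \<eta> * a" by (simp add: algebra_simps)
      ultimately have "a * (1 - 2*\<eta>) \<ge> b + c/2" by linarith
      then have "a * (1 - 2*\<eta>) * ln (real n) \<ge> (b + c/2) * ln (real n)" using lnn by (intro mult_right_mono) auto
      moreover have "e * (1 - 2*\<eta>) \<le> 1" using e eta by (intro mult_le_one) auto
      ultimately show ?thesis by linarith
    qed
    finally show ?thesis using n(3) by (simp add: algebra_simps)
  qed
  then have "\<mu> ^ x \<ge> 2 * real n powr b"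
  proof -
    assume h: "real x * ln \<mu> \<ge> ln 2 + b * ln (real n)"
    have "\<mu> ^ x = exp (real x * ln \<mu>)" using mugt by (simp add: exp_of_nat_mult)
    also have "\<dots> \<ge> exp (ln 2 + b * ln (real n))" using h by simp
    finally show ?thesis using npos by (simp add: exp_add powr_def mult.commute)
  qed
  then have sub: "{m. real m \<ge> \<mu> ^ x / 2} \<subseteq> {m. real m \<ge> real n powr (real j - 1 + \<delta>)}"
    using b_def by auto
  have "measure_pmf.prob (gw_generation off x) {m. real m \<ge> \<mu> ^ x / 2}
      \<le> measure_pmf.prob (gw_generation off x) {m. real m \<ge> real n powr (real j - 1 + \<delta>)}"
    by (rule measure_pmf.finite_measure_mono[OF sub]) simp
  then show ?thesis using main Kb unfolding off_def C_def by linarith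
qed


theorem lemma7p3:
  fixes j k :: nat and \<delta> c :: real
    and \<epsilon> \<epsilon>s :: "nat \<Rightarrow> real"
  assumes "1 \<le> j" "j < k"
    and "0 < \<delta>" "\<delta> < 1/6" "0 < c"
    and "\<epsilon> \<longlonglongrightarrow> 0"
    and "filterlim (\<lambda>n. \<epsilon> n ^ 3 * real n ^ j) at_top sequentially"
    and "filterlim (\<lambda>n. \<epsilon> n ^ 2 * real n powr (1 - 2 * \<delta>)) at_top sequentially"
    and "eventually (\<lambda>n. \<epsilon>s n > 0) sequentially"
    and "(\<lambda>n. real n powr (-1/2 + \<delta>) / \<epsilon>s n) \<longlonglongrightarrow> 0"
    and "(\<lambda>n. \<epsilon>s n / \<epsilon> n) \<longlonglongrightarrow> 0"
  shows "eventually (\<lambda>n.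
      let p0 = 1 / ((real (k choose j) - 1) * real (n choose (k - j)));
          p = (1 + \<epsilon> n) * p0;
          N = nat \<lfloor>(1 - \<epsilon>s n) * real (n choose (k - j))\<rfloor>;
          offspring = scale_pmf ((k choose j) - 1) (binomial_pmf N p);
          x = nat \<lfloor>(real j - 1 + \<delta> + c) / \<epsilon> n * ln (real n)\<rfloor>
      in measure_pmf.prob (gw_generation offspring x)
           {m. real m \<ge> real n powr (real j - 1 + \<delta>)} \<ge> \<epsilon> n / real n powr c)
    sequentially"
proof -
  define a where "a = real j - 1 + \<delta> + c"
  have apos: "a > 0" using assms a_def by simp
  define \<eta> where "\<eta> = min (1/2) (c / (4 * a))"
  have eta: "0 < \<eta>" "\<eta> \<le> 1/2" "\<eta> \<le> c / (4 * (real j - 1 + \<delta> + c))"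
    using apos assms a_def by (auto simp: \<eta>_def)
  define r where "r = real (k - j)"
  define M where "M = 4 + 8 * (real (k choose j) - 1)"
  have Mpos: "M > 0" unfolding M_def
  proof -
    have "0 < k choose j" using assms(2) by (simp add: zero_less_binomial_iff)
    then have "k choose j \<ge> 1" by linarith
    then show "0 < 4 + 8 * (real (k choose j) - 1)" by simp
  qed
  define T where "T = 2 * (1 + ln 2) / c"
  have F1: "eventually (\<lambda>n. \<epsilon> n > 0) sequentially"
  proof -
    have "eventually (\<lambda>n. 0 < \<epsilon> n ^ 3 * real n ^ j) sequentially"
      using assms(7) by (simp add: filterlim_at_top_dense)
    then show ?thesis
    proof (rule eventually_mono)
      fix n assume h: "0 < \<epsilon> n ^ 3 * real n ^ j"
      show "\<epsilon> n > 0"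
      proof (rule ccontr)
        assume "\<not> \<epsilon> n > 0"
        then have "\<epsilon> n ^ 3 \<le> 0" using mult_nonneg_nonpos[of "\<epsilon> n * \<epsilon> n" "\<epsilon> n"] by (simp add: power3_eq_cube)
        then have "\<epsilon> n ^ 3 * real n ^ j \<le> 0" by (simp add: mult_nonpos_nonneg)
        then show False using h by simp
      qed
    qed
  qed
  have F2: "eventually (\<lambda>n. \<epsilon> n < \<eta>) sequentially"
    using order_tendstoD(2)[OF assms(6)] eta by simp
  have F4: "eventually (\<lambda>n. \<epsilon>s n / \<epsilon> n < \<eta>/4) sequentially"
    using order_tendstoD(2)[OF assms(11), of "\<eta>/4"] eta by simp
  have F5: "eventually (\<lambda>n. (4 * r / \<eta>)^2 < \<epsilon> n ^ 2 * real n powr (1 - 2 * \<delta>)) sequentially"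
    using assms(8) by (simp add: filterlim_at_top_dense)
  have F6: "eventually (\<lambda>n. n \<ge> max (2*k) (max (nat \<lceil>M powr (1/c)\<rceil>) (nat \<lceil>exp T\<rceil>))) sequentially"
    by (rule eventually_ge_at_top)
  show ?thesis
    using F1 F2 F4 F5 F6 assms(9)
  proof eventually_elim
    case (elim n)
    have e: "0 < \<epsilon> n" "\<epsilon> n \<le> \<eta>" using elim by auto
    have es: "0 < \<epsilon>s n" using elim by auto
    have es2: "\<epsilon>s n \<le> \<eta>/4 * \<epsilon> n"
    proof -
      have "\<epsilon>s n = (\<epsilon>s n / \<epsilon> n) * \<epsilon> n" using e by simp
      also have "\<dots> \<le> \<eta>/4 * \<epsilon> n" using elim e by (intro mult_right_mono) auto
      finally show ?thesis .
    qed
    have h6: "2*k \<le> n \<and> M powr (1/c) \<le> real n \<and> exp T \<le> real n" using elim by simp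
    have n2k: "2 * k \<le> n" using h6 by simp
    have n1: "real n \<ge> 1" using n2k assms by simp
    have rn: "real (k - j) / real n \<le> \<eta>/4 * \<epsilon> n"
    proof -
      have "real n powr (1 - 2 * \<delta>) \<le> real n powr 2" using n1 assms by (intro powr_mono) auto
      also have "\<dots> = real n ^ 2" using n1 by (simp add: powr_realpow)
      finally have pp: "real n powr (1 - 2 * \<delta>) \<le> real n ^ 2" .
      have q1: "\<epsilon> n ^ 2 * real n powr (1 - 2 * \<delta>) \<le> \<epsilon> n ^ 2 * real n ^ 2"
        using pp by (intro mult_left_mono) auto
      have q2: "(\<epsilon> n * real n)^2 = \<epsilon> n ^ 2 * real n ^ 2" by (simp add: power_mult_distrib)
      have "(4 * r / \<eta>)^2 < (\<epsilon> n * real n)^2" using elim q1 q2 by linarith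
      then have "4 * r / \<eta> < \<epsilon> n * real n"
        by (rule power_less_imp_less_base) (use e n1 in simp)
      then have "4 * r < \<eta> * (\<epsilon> n * real n)" using eta by (simp add: field_simps)
      then show ?thesis using n1 r_def by (simp add: field_simps)
    qed
    have pc: "M \<le> real n powr c"
    proof -
      have "M powr (1/c) \<le> real n" using h6 by simp
      then have "(M powr (1/c)) powr c \<le> real n powr c" using assms by (intro powr_mono2) auto
      then show ?thesis using Mpos assms by (simp add: powr_powr)
    qed
    have lnn: "1 + ln 2 \<le> c/2 * ln (real n)"
    proof -
      have "exp T \<le> real n" using h6 by simp
      then have "T \<le> ln (real n)" using n1 by (simp add: ln_ge_iff)
      then have "c/2 * T \<le> c/2 * ln (real n)" using assms by (intro mult_left_mono) auto
      then show ?thesis unfolding T_def using assms by simp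
    qed
    show ?case unfolding Let_def
      by (rule core[OF assms(1,2,3,5) eta e es es2 rn n2k pc[unfolded M_def] lnn refl refl refl])
  qed
qed

end
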